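(* Let $n,m\ge 5$ be integers with $m\equiv 0\pmod 4$ and $n\equiv 1\pmod 4$. Then $\gamma_p(C_n\times C_m)\le\frac{(n+1)m}{4}$.
   Context: All graphs are finite, simple and undirected. $C_n$ denotes the cycle of order $n$ and $G\times H$ the Cartesian product of graphs. For a graph $G$ without isolated vertices, a set $D\subseteq V(G)$ is a paired dominating set if every vertex outside $D$ has a neighbour in $D$ and the induced subgraph $G[D]$ has a perfect matching; $\gamma_p(G)$ is the minimum size of a paired dominating set. *)

theory Defs
  imports Complex_Main
begin

(* A finite simple graph is given by a vertex set V and a symmetric,
   irreflexive adjacency relation E (only its restriction to V matters). *)

definition dominating :: "'a set \<Rightarrow> ('a \<Rightarrow> 'a \<Rightarrow> bool) \<Rightarrow> 'a set \<Rightarrow> bool" where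
  "dominating V E D \<longleftrightarrow> D \<subseteq> V \<and> (\<forall>v\<in>V - D. \<exists>u\<in>D. E v u)"

definition perfect_matching_on :: "('a \<Rightarrow> 'a \<Rightarrow> bool) \<Rightarrow> 'a set \<Rightarrow> 'a set set \<Rightarrow> bool" where
  "perfect_matching_on E D M \<longleftrightarrow>
     (\<forall>e\<in>M. \<exists>u v. e = {u, v} \<and> u \<in> D \<and> v \<in> D \<and> u \<noteq> v \<and> E u v) \<and>
     (\<forall>e\<in>M. \<forall>f\<in>M. e \<noteq> f \<longrightarrow> e \<inter> f = {}) \<and>
     \<Union>M = D"

definition paired_dominating :: "'a set \<Rightarrow> ('a \<Rightarrow> 'a \<Rightarrow> bool) \<Rightarrow> 'a set \<Rightarrow> bool" where
  "paired_dominating V E D \<longleftrightarrow> dominating V E D \<and> (\<exists>M. perfect_matching_on E D M)"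

definition gamma_p :: "'a set \<Rightarrow> ('a \<Rightarrow> 'a \<Rightarrow> bool) \<Rightarrow> nat" where
  "gamma_p V E = (LEAST k. \<exists>D. paired_dominating V E D \<and> card D = k)"

definition cycle_adj :: "nat \<Rightarrow> nat \<Rightarrow> nat \<Rightarrow> bool" where
  "cycle_adj n i j \<longleftrightarrow> i \<noteq> j \<and> (j = (i + 1) mod n \<or> i = (j + 1) mod n)"

definition cart_adj :: "('a \<Rightarrow> 'a \<Rightarrow> bool) \<Rightarrow> ('b \<Rightarrow> 'b \<Rightarrow> bool) \<Rightarrow> 'a \<times> 'b \<Rightarrow> 'a \<times> 'b \<Rightarrow> bool" where
  "cart_adj E1 E2 x y \<longleftrightarrow>
     (fst x = fst y \<and> E2 (snd x) (snd y)) \<or> (snd x = snd y \<and> E1 (fst x) (fst y))"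

definition torus_vertices :: "nat \<Rightarrow> nat \<Rightarrow> (nat \<times> nat) set" where
  "torus_vertices n m = {0..<n} \<times> {0..<m}"

definition torus_adj :: "nat \<Rightarrow> nat \<Rightarrow> nat \<times> nat \<Rightarrow> nat \<times> nat \<Rightarrow> bool" where
  "torus_adj n m = cart_adj (cycle_adj n) (cycle_adj m)"

end

theory Submission
  imports Defs
begin

lemma m4cases: "(x::nat) mod 4 = 0 \<or> x mod 4 = 1 \<or> x mod 4 = 2 \<or> x mod 4 = 3"
proof -
  have "x mod 4 < 4" by simp
  then show ?thesis by linarith
qed
lemma ev4: "even (i::nat) \<Longrightarrow> i mod 4 = 0 \<or> i mod 4 = 2"
proof -
  assume "even i" then obtain p where p: "i = 2*p" by blast
  have "i mod 4 = 2*(p mod 2)" using p mod_mult_mult1[of 2 p 2] by simp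
  moreover have "p mod 2 = 0 \<or> p mod 2 = 1" by auto
  ultimately show ?thesis by auto
qed
lemma sh: "((j::nat) + c) mod 4 = (j mod 4 + c) mod 4" by (simp add: mod_add_left_eq)
lemma l1: "even (i::nat) \<Longrightarrow> \<not> (j mod 4 = i mod 4 \<or> j mod 4 = i mod 4 + 1) \<Longrightarrow>
   \<not> ((j+1) mod 4 = i mod 4 \<or> (j+1) mod 4 = i mod 4 + 1) \<Longrightarrow> (j+3) mod 4 = i mod 4 \<or> (j+3) mod 4 = i mod 4 + 1"
  using m4cases[of j] sh[of j 1] sh[of j 3] ev4[of i] by auto
lemma l2: "\<not> (even (i::nat)) \<Longrightarrow> \<not> (j mod 4 = (i-1) mod 4 \<or> j mod 4 = (i-1) mod 4 + 1) \<Longrightarrow>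
   (j mod 4 = (i+1) mod 4 \<or> j mod 4 = (i+1) mod 4 + 1)"
proof -
  assume o: "\<not> even i" and h: "\<not> (j mod 4 = (i-1) mod 4 \<or> j mod 4 = (i-1) mod 4 + 1)"
  obtain q where q: "i = Suc q" using o by (cases i) auto
  have eq: "even q" using o q by simp
  have "i - 1 = q" "i + 1 = q + 2" using q by auto
  then show ?thesis using h m4cases[of j] sh[of q 2] ev4[OF eq] by auto
qed
lemma l3: "\<not> (even (i::nat)) \<Longrightarrow> (i::nat) < n \<Longrightarrow> n mod 4 = 1 \<Longrightarrow> i + 1 < n"
proof -
  assume o: "\<not> even i" and "i < n" and n: "n mod 4 = 1"
  have "i + 1 \<noteq> n"
  proof
    assume "i + 1 = n"
    then have "even n" using o by (auto simp: even_Suc)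
    then show False using ev4[of n] n by simp
  qed
  then show ?thesis using \<open>i<n\<close> by simp
qed
lemma l4: "(j::nat) < m \<Longrightarrow> m mod 4 = 0 \<Longrightarrow> even (i::nat) \<Longrightarrow> j mod 4 = i mod 4 \<Longrightarrow> Suc j < m"
proof -
  assume "j < m" "m mod 4 = 0" "even i" "j mod 4 = i mod 4"
  moreover have "Suc j mod 4 = (j mod 4 + 1) mod 4" using sh[of j 1] by simp
  ultimately have "Suc j \<noteq> m" using ev4[of i] by auto
  then show ?thesis using \<open>j<m\<close> by simp
qed
lemma l5: "(j::nat) mod 4 = i mod 4 \<Longrightarrow> even i \<Longrightarrow> Suc j mod 4 = i mod 4 + 1"
  using sh[of j 1] ev4[of i] by auto
lemma l6: "(j::nat) mod 4 \<noteq> i mod 4 \<Longrightarrow> j mod 4 = i mod 4 + 1 \<Longrightarrow> j = Suc (j - 1) \<and> (j-1) mod 4 = i mod 4"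
proof -
  assume a: "j mod 4 = i mod 4 + 1"
  then have "j \<noteq> 0" by auto
  then obtain t where t: "j = Suc t" by (cases j) auto
  have "Suc t mod 4 = (t mod 4 + 1) mod 4" using sh[of t 1] by simp
  then show ?thesis using a t m4cases[of t] m4cases[of i] by auto
qed
lemma l7: "(i::nat) mod 4 = j mod 4 \<Longrightarrow> i mod 4 = j' mod 4 \<Longrightarrow> (j = j' \<or> j = Suc j' \<or> Suc j = j') \<Longrightarrow> j = j'"
  using sh[of j 1] sh[of j' 1] m4cases[of j] m4cases[of j'] by auto
lemma l8: "(i::nat) < 4*k+1 \<Longrightarrow> i div 2 \<le> 2*k"
proof -
  assume "i < 4*k+1" then have "i \<le> 4*k" by simp
  then have "i div 2 \<le> (4*k) div 2" by (rule div_le_mono)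
  then show ?thesis by simp
qed
lemma l9: "(j::nat) < 4*l \<Longrightarrow> j div 4 < l"
  by (simp add: less_mult_imp_div_less mult.commute)
lemma l10: "(j::nat) mod 4 = i mod 4 \<or> j mod 4 = i mod 4 + 1 \<Longrightarrow> j mod 4 - i mod 4 < 2" by auto
lemma l11: "even (i::nat) \<Longrightarrow> j mod 4 = i mod 4 \<or> j mod 4 = i mod 4 + 1 \<Longrightarrow>
   4*(j div 4) + 2*((i div 2) mod 2) + (j mod 4 - i mod 4) = j"
proof -
  assume e: "even i" and d: "j mod 4 = i mod 4 \<or> j mod 4 = i mod 4 + 1"
  obtain p where p: "i = 2*p" using e by blast
  have "i mod 4 = 2*(p mod 2)" using p mod_mult_mult1[of 2 p 2] by simp
  moreover have "i div 2 = p" using p by simp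
  moreover have "4*(j div 4) + j mod 4 = j" by simp
  ultimately have x: "2*((i div 2) mod 2) = i mod 4" by simp
  show ?thesis using x d \<open>4*(j div 4) + j mod 4 = j\<close> by linarith
qed
lemma l12: "\<not> even (i::nat) \<Longrightarrow> even (i - 1) \<and> even (i+1)" by (cases i) auto
lemma l13: "(n::nat) mod 4 = 1 \<Longrightarrow> n = 4*(n div 4)+1"
  using div_mult_mod_eq[of n 4] by linarith
lemma l14: "(m::nat) mod 4 = 0 \<Longrightarrow> m = 4*(m div 4)"
  using div_mult_mod_eq[of m 4] by linarith
lemma l15: "(j::nat) mod 4 = (j+3) mod 4 \<Longrightarrow> False"
  using sh[of j 3] m4cases[of j] by auto

definition DD :: "nat \<Rightarrow> nat \<Rightarrow> (nat \<times> nat) set" where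
  "DD n m = {(i,j). i<n \<and> j<m \<and> even i \<and> (j mod 4 = i mod 4 \<or> j mod 4 = i mod 4 + 1)}"

lemma DD_card:
  assumes "m mod 4 = 0" "n mod 4 = 1"
  shows "card (DD n m) \<le> (n + 1) * m div 4"
proof -
  define k where "k = n div 4"
  define l where "l = m div 4"
  have n: "n = 4*k+1" and m: "m = 4*l" using assms k_def l_def l13 l14 by auto
  define f where "f = (\<lambda>(a::nat,b::nat,e::nat). (2*a, 4*b + 2*(a mod 2) + e))"
  have sub: "DD n m \<subseteq> f ` ({..2*k} \<times> {..<l} \<times> {..<(2::nat)})"
  proof
    fix x assume "x \<in> DD n m"
    then obtain i j where x: "x = (i,j)" and h: "i<n" "j<m" "even i"
        "j mod 4 = i mod 4 \<or> j mod 4 = i mod 4 + 1"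
      unfolding DD_def by auto
    have "(i div 2, j div 4, j mod 4 - i mod 4) \<in> {..2*k} \<times> {..<l} \<times> {..<2}"
      using h n m l8[of i k] l9[of j l] l10[of j i] by auto
    moreover have "f (i div 2, j div 4, j mod 4 - i mod 4) = (i,j)"
      using h l11[of i j] unfolding f_def by simp
    ultimately show "x \<in> f ` ({..2*k} \<times> {..<l} \<times> {..<(2::nat)})" using x by (metis image_eqI)
  qed
  have "card (DD n m) \<le> card (f ` ({..2*k} \<times> {..<l} \<times> {..<(2::nat)}))"
    by (rule card_mono[OF _ sub]) auto
  also have "\<dots> \<le> card ({..2*k} \<times> {..<l} \<times> {..<(2::nat)})" by (rule card_image_le) auto
  also have "\<dots> = (2*k+1)*l*2" by (simp add: card_cartesian_product)
  also have "\<dots> = (n + 1) * m div 4" using n m by simp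
  finally show ?thesis .
qed


lemma DD_dom:
  assumes "m mod 4 = 0" "n mod 4 = 1" "m \<ge> 4"
  shows "dominating (torus_vertices n m) (torus_adj n m) (DD n m)"
  unfolding dominating_def
proof (intro conjI ballI)
  show "DD n m \<subseteq> torus_vertices n m" unfolding DD_def torus_vertices_def by auto
next
  fix v assume v: "v \<in> torus_vertices n m - DD n m"
  then obtain i j where vij: "v = (i,j)" and ij: "i<n" "j<m" unfolding torus_vertices_def by auto
  have nd: "\<not> (even i \<and> (j mod 4 = i mod 4 \<or> j mod 4 = i mod 4 + 1))"
    using v vij ij unfolding DD_def by auto
  have m4: "4 dvd m" using assms by auto
  show "\<exists>u\<in>DD n m. torus_adj n m v u"
  proof (cases "even i")
    case True
    define jr where "jr = (j+1) mod m"
    define jl where "jl = (j+m-1) mod m"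
    have jr4: "jr mod 4 = (j+1) mod 4" unfolding jr_def using m4 by (simp add: mod_mod_cancel)
    have jl4: "jl mod 4 = (j+3) mod 4"
    proof -
      have "jl mod 4 = (j+m-1) mod 4" unfolding jl_def using m4 by (simp add: mod_mod_cancel)
      also have "\<dots> = (j+3) mod 4"
      proof -
        obtain q where q: "m = 4*q" using m4 by blast
        have "j+m-1 = (j+3) + 4*(q-1)" using q \<open>m\<ge>4\<close> by simp
        then show ?thesis by simp
      qed
      finally show ?thesis .
    qed
    have adjr: "cycle_adj m j jr"
    proof (cases "j+1 < m")
      case True then show ?thesis by (simp add: cycle_adj_def jr_def)
    next
      case False
      then have "j+1 = m" using ij by simp
      then show ?thesis using \<open>m\<ge>4\<close> by (auto simp: cycle_adj_def jr_def)
    qed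
    have adjl: "cycle_adj m j jl"
    proof -
      have "(jl + 1) mod m = (j + m - 1 + 1) mod m" unfolding jl_def
        by (rule mod_add_left_eq)
      also have "j + m - 1 + 1 = j + m" using \<open>m \<ge> 4\<close> by simp
      also have "(j + m) mod m = j" using ij by simp
      finally have e: "(jl+1) mod m = j" .
      have "jl \<noteq> j"
      proof
        assume "jl = j" then have "j mod 4 = (j+3) mod 4" using jl4 by simp
        then show False by (rule l15)
      qed
      then show ?thesis unfolding cycle_adj_def using e by auto
    qed
    have "jr < m" "jl < m" unfolding jr_def jl_def using ij by auto
    show ?thesis
    proof (cases "jr mod 4 = i mod 4 \<or> jr mod 4 = i mod 4 + 1")
      case True
      then have "(i,jr) \<in> DD n m" using \<open>even i\<close> ij \<open>jr<m\<close> unfolding DD_def by auto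
      moreover have "torus_adj n m v (i,jr)" using vij adjr unfolding torus_adj_def cart_adj_def by simp
      ultimately show ?thesis by blast
    next
      case False
      then have "jl mod 4 = i mod 4 \<or> jl mod 4 = i mod 4 + 1"
      proof -
        have A: "\<not> (j mod 4 = i mod 4 \<or> j mod 4 = i mod 4 + 1)" using nd \<open>even i\<close> by simp
        have B: "\<not> ((j+1) mod 4 = i mod 4 \<or> (j+1) mod 4 = i mod 4 + 1)" using False jr4 by simp
        show ?thesis using l1[OF \<open>even i\<close> A B] jl4 by simp
      qed
      then have "(i,jl) \<in> DD n m" using \<open>even i\<close> ij \<open>jl<m\<close> unfolding DD_def by auto
      moreover have "torus_adj n m v (i,jl)" using vij adjl unfolding torus_adj_def cart_adj_def by simp
      ultimately show ?thesis by blast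
    qed
  next
    case False
    have "i+1 < n" using l3[OF False ij(1) assms(2)] .
    have adjr: "cycle_adj n i (i+1)" unfolding cycle_adj_def using \<open>i+1<n\<close> by simp
    have adjl: "cycle_adj n i (i-1)" unfolding cycle_adj_def using \<open>i+1<n\<close> False
      by (cases i) auto
    show ?thesis
    proof (cases "j mod 4 = (i-1) mod 4 \<or> j mod 4 = (i-1) mod 4 + 1")
      case True
      then have "(i-1,j) \<in> DD n m" using False ij l12[OF False] unfolding DD_def by auto
      moreover have "torus_adj n m v (i-1,j)" using vij adjl unfolding torus_adj_def cart_adj_def by simp
      ultimately show ?thesis by blast
    next
      case c: False
      then have "(i+1,j) \<in> DD n m" using l2[OF False c] ij \<open>i+1<n\<close> l12[OF False] unfolding DD_def by auto
      moreover have "torus_adj n m v (i+1,j)" using vij adjr unfolding torus_adj_def cart_adj_def by simp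
      ultimately show ?thesis by blast
    qed
  qed
qed

lemma DD_match:
  assumes "m mod 4 = 0" "m \<ge> 4"
  shows "\<exists>M. perfect_matching_on (torus_adj n m) (DD n m) M"
proof -
  define S where "S = {(i,j). (i,j) \<in> DD n m \<and> j mod 4 = i mod 4}"
  define M where "M = (\<lambda>(i,j). {(i,j),(i,Suc j)}) ` S"
  have Sprop: "(i,Suc j) \<in> DD n m \<and> torus_adj n m (i,j) (i,Suc j)" if "(i,j) \<in> S" for i j
  proof -
    have h: "i<n" "j<m" "even i" "j mod 4 = i mod 4" using that unfolding S_def DD_def by auto
    have "Suc j < m" using l4[OF h(2) assms(1) h(3) h(4)] .
    then have "(i,Suc j) \<in> DD n m" using h l5[of j i] unfolding DD_def by auto
    moreover have "cycle_adj m j (Suc j)" unfolding cycle_adj_def using \<open>Suc j < m\<close> by simp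
    ultimately show ?thesis unfolding torus_adj_def cart_adj_def by simp
  qed
  have "perfect_matching_on (torus_adj n m) (DD n m) M"
    unfolding perfect_matching_on_def
  proof (intro conjI ballI impI)
    fix e assume "e \<in> M"
    then obtain i j where "(i,j) \<in> S" "e = {(i,j),(i,Suc j)}" unfolding M_def by auto
    note ij = this
    have "(i,j) \<in> DD n m" using ij(1) unfolding S_def by simp
    moreover have "(i,Suc j) \<in> DD n m" "torus_adj n m (i,j) (i,Suc j)" using Sprop[OF ij(1)] by simp_all
    moreover have "(i,j) \<noteq> (i,Suc j)" by simp
    ultimately show "\<exists>u v. e = {u, v} \<and> u \<in> DD n m \<and> v \<in> DD n m \<and> u \<noteq> v \<and> torus_adj n m u v"
      using ij(2) by blast
  next
    fix e f assume "e \<in> M" "f \<in> M" "e \<noteq> f"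
    then obtain i j i' j' where a: "(i,j) \<in> S" "e = {(i,j),(i,Suc j)}"
      and b: "(i',j') \<in> S" "f = {(i',j'),(i',Suc j')}" unfolding M_def by auto
    have "i mod 4 = j mod 4" "i' mod 4 = j' mod 4" using a b unfolding S_def by auto
    note mm = this
    show "e \<inter> f = {}"
    proof (rule ccontr)
      assume "e \<inter> f \<noteq> {}"
      then have "i = i'" and "j = j' \<or> j = Suc j' \<or> Suc j = j'" using a b by auto
      then have "j = j'" using mm l7[of i j j'] by metis
      then show False using \<open>i = i'\<close> a b \<open>e\<noteq>f\<close> by simp
    qed
  next
    show "\<Union>M = DD n m"
    proof
      show "\<Union>M \<subseteq> DD n m"
      proof
        fix x assume "x \<in> \<Union>M"
        then obtain e where "e \<in> M" "x \<in> e" by blast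
        then obtain i j where ij: "(i,j) \<in> S" "e = {(i,j),(i,Suc j)}" unfolding M_def by auto
        have "(i,j) \<in> DD n m" using ij(1) unfolding S_def by simp
        moreover have "(i,Suc j) \<in> DD n m" using Sprop[OF ij(1)] by simp
        ultimately show "x \<in> DD n m" using ij(2) \<open>x \<in> e\<close> by blast
      qed
    next
      show "DD n m \<subseteq> \<Union>M"
      proof
        fix x assume x: "x \<in> DD n m"
        then obtain i j where xij: "x = (i,j)" and h: "i<n" "j<m" "even i"
          "j mod 4 = i mod 4 \<or> j mod 4 = i mod 4 + 1" unfolding DD_def by auto
        show "x \<in> \<Union>M"
        proof (cases "j mod 4 = i mod 4")
          case True
          then have "(i,j) \<in> S" using x xij unfolding S_def by auto
          then show ?thesis unfolding M_def xij by blast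
        next
          case False
          then have j: "j = Suc (j - 1)" "(j-1) mod 4 = i mod 4" using h l6[of j i] False by auto
          then have "(i,j-1) \<in> DD n m" using h unfolding DD_def by auto
          then have "(i,j-1) \<in> S" using j unfolding S_def by auto
          then have "{(i,j-1),(i,Suc (j-1))} \<in> M" unfolding M_def by blast
          then show ?thesis using j xij by (metis UnionI insertCI)
        qed
      qed
    qed
  qed
  then show ?thesis by blast
qed

theorem theorem5p2:
  fixes n m :: nat
  assumes "n \<ge> 5" and "m \<ge> 5" and "m mod 4 = 0" and "n mod 4 = 1"
  shows "real (gamma_p (torus_vertices n m) (torus_adj n m)) \<le> real ((n + 1) * m) / 4"
proof -
  have pd: "paired_dominating (torus_vertices n m) (torus_adj n m) (DD n m)"
    unfolding paired_dominating_def using DD_dom DD_match assms by auto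
  have "gamma_p (torus_vertices n m) (torus_adj n m) \<le> card (DD n m)"
    unfolding gamma_p_def by (rule Least_le) (use pd in blast)
  also have "\<dots> \<le> (n + 1) * m div 4" using DD_card assms by auto
  finally have g: "gamma_p (torus_vertices n m) (torus_adj n m) \<le> (n + 1) * m div 4" .
  have "4 dvd (n+1)*m" using assms by auto
  then have "real ((n + 1) * m div 4) = real ((n + 1) * m) / 4" by (simp add: real_of_nat_div)
  then show ?thesis using g by (metis of_nat_le_iff)
qed

end
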